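(* Let $A(0)=1$ and $A(n)=nA(n-1)+1$ for $n\ge1$, and for $k\ge1$ let $c_k$ be the unique integer in $[0,2^k)$ with $A(c_k)\equiv0\pmod{2^k}$. Then for all $k\ge1$, $$c_{k+1}=\begin{cases}c_k & \text{if } 2^{k+1}\mid A(c_k),\\ c_k+2^k & \text{otherwise.}\end{cases}$$
   Context: For each $k\ge1$ there is exactly one integer $n\in[0,2^k)$ with $A(n)\equiv 0\pmod{2^k}$; this is $c_k$. *)

theory Defs
  imports Main
begin

fun A :: "nat \<Rightarrow> nat" where
  "A 0 = 1"
| "A (Suc n) = Suc n * A n + 1"

definition c :: "nat \<Rightarrow> nat" where
  "c k = (THE n. n < 2 ^ k \<and> 2 ^ k dvd A n)"

end

theory Submission
  imports Defs
begin

lemma A_par: "odd (A n) \<longleftrightarrow> even n"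
  by (induction n) auto

lemma A_shift:
  assumes "even h" "h > 0"
  shows "\<exists>q. A (n+h) = A n + h*q \<and> (odd q \<longleftrightarrow> odd n)"
proof (induction n)
  case 0
  obtain m where m: "h = Suc m" using assms(2) by (cases h) auto
  have "odd m" using assms m by auto
  hence "even (A m)" using A_par by blast
  have "A (0+h) = A 0 + h * A m" using m by simp
  thus ?case using \<open>even (A m)\<close> by auto
next
  case (Suc n)
  then obtain q where q: "A (n+h) = A n + h*q" "odd q \<longleftrightarrow> odd n" by blast
  have "A (Suc n + h) = Suc (n+h) * A (n+h) + 1" by simp
  also have "\<dots> = A (Suc n) + h * (A n + Suc (n+h) * q)"
    using q(1) by (simp add: algebra_simps)
  finally have e: "A (Suc n + h) = A (Suc n) + h * (A n + Suc (n+h) * q)" .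
  have "odd (A n + Suc (n+h) * q) \<longleftrightarrow> odd (Suc n)"
    using q(2) A_par[of n] assms(1) by auto
  thus ?case using e by blast
qed

lemma ex_c: "k \<ge> 1 \<Longrightarrow> \<exists>n. n < 2^k \<and> 2^k dvd A n"
proof (induction k rule: dec_induct)
  case base
  show ?case by (rule exI[of _ 1]) simp
next
  case (step k)
  then obtain n where n: "n < 2^k" "2^k dvd A n" by blast
  then obtain m where m: "A n = 2^k * m" by blast
  have "even (A n)" using n(2) step(1) by (simp add: dvd_trans[of 2 "2^k"] dvd_power)
  hence "odd n" using A_par by blast
  show ?case
  proof (cases "even m")
    case True
    then show ?thesis using n m by (auto intro!: exI[of _ n])
  next
    case False
    obtain q where q: "A (n+2^k) = A n + 2^k*q" "odd q \<longleftrightarrow> odd n"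
      using A_shift[of "2^k" n] step(1) by auto
    have "A (n+2^k) = 2^k * (m+q)" using q m by (simp add: algebra_simps)
    moreover have "even (m+q)" using False q(2) \<open>odd n\<close> by auto
    ultimately have "2^Suc k dvd A (n+2^k)" by auto
    thus ?thesis using n(1) by (intro exI[of _ "n+2^k"]) auto
  qed
qed

lemma uniq_c: "k \<ge> 1 \<Longrightarrow> n < 2^k \<Longrightarrow> n' < 2^k \<Longrightarrow> 2^k dvd A n \<Longrightarrow> 2^k dvd A n' \<Longrightarrow> n = n'"
proof (induction k arbitrary: n n' rule: dec_induct)
  case base
  then show ?case using A_par[of n] A_par[of n'] by (auto simp: less_2_cases_iff)
next
  case (step k)
  have h: "even ((2::nat)^k)" "(2::nat)^k > 0" using step(1) by auto
  have red: "2^k dvd A (x mod 2^k) \<and> (x \<noteq> x mod 2^k \<longrightarrow> x = x mod 2^k + 2^k)"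
    if "x < 2^Suc k" "2^Suc k dvd A x" for x
  proof (cases "x < 2^k")
    case True
    then show ?thesis using that by (simp add: dvd_trans[of "2^k" "2^Suc k"])
  next
    case False
    define r where "r = x - 2^k"
    have x: "x = r + 2^k" "r < 2^k" using False that(1) r_def by auto
    have rm: "x mod 2^k = r" using x by simp
    obtain q where q: "A (r+2^k) = A r + 2^k*q" using A_shift[OF h, of r] by blast
    have "2^k dvd A x" using that(2) by (simp add: dvd_trans[of "2^k" "2^Suc k"])
    hence "2^k dvd A r" using q x(1) by (simp add: dvd_add_left_iff)
    thus ?thesis using rm x by simp
  qed
  obtain r where r: "r = n mod 2^k" by blast
  have rn: "2^k dvd A r" "n \<noteq> r \<longrightarrow> n = r + 2^k" using red[OF step.prems(1) step.prems(3)] r by auto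
  have rn': "2^k dvd A (n' mod 2^k)" "n' \<noteq> n' mod 2^k \<longrightarrow> n' = n' mod 2^k + 2^k"
    using red[OF step.prems(2) step.prems(4)] by auto
  have "r < 2^k" "n' mod 2^k < 2^k" using r h by auto
  hence eq: "n' mod 2^k = r" using step.IH[OF _ _ rn(1) rn'(1)] by auto
  have "even (A r)" using rn(1) step(1) by (simp add: dvd_trans[of 2 "2^k"] dvd_power)
  hence odd_r: "odd r" using A_par by blast
  obtain q where q: "A (r+2^k) = A r + 2^k*q" "odd q" using A_shift[OF h, of r] odd_r by blast
  have no: "\<not> (2^Suc k dvd A r \<and> 2^Suc k dvd A (r + 2^k))"
  proof
    assume a: "2^Suc k dvd A r \<and> 2^Suc k dvd A (r + 2^k)"
    hence "2^Suc k dvd 2^k*q" using q(1) by (metis dvd_add_right_iff)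
    hence "2 dvd q" by simp
    thus False using q(2) by simp
  qed
  show ?case
  proof (cases "n = r")
    case True
    then show ?thesis using rn' eq no step by metis
  next
    case False
    then show ?thesis using rn rn' eq no step by metis
  qed
qed

theorem corollaryA11:
  fixes k :: nat
  assumes "k \<ge> 1"
  shows "c (Suc k) = (if 2 ^ (Suc k) dvd A (c k) then c k else c k + 2 ^ k)"
proof -
  have ck: "c k < 2^k \<and> 2^k dvd A (c k)"
    unfolding c_def
    apply (rule theI')
    using ex_c[OF assms] uniq_c[OF assms] by blast
  have k1: "Suc k \<ge> 1" by simp
  define d where "d = (if 2 ^ (Suc k) dvd A (c k) then c k else c k + 2 ^ k)"
  have dprop: "d < 2^Suc k \<and> 2^Suc k dvd A d"
  proof (cases "2 ^ (Suc k) dvd A (c k)")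
    case True
    then show ?thesis using ck d_def by auto
  next
    case False
    obtain m where m: "A (c k) = 2^k * m" using ck by blast
    have "even (A (c k))" using ck assms by (simp add: dvd_trans[of 2 "2^k"] dvd_power)
    hence "odd (c k)" using A_par by blast
    have "odd m" using False m by auto
    obtain q where q: "A (c k+2^k) = A (c k) + 2^k*q" "odd q \<longleftrightarrow> odd (c k)"
      using A_shift[of "2^k" "c k"] assms by auto
    have "A (c k+2^k) = 2^k * (m+q)" using q m by (simp add: algebra_simps)
    moreover have "even (m+q)" using \<open>odd m\<close> q(2) \<open>odd (c k)\<close> by auto
    ultimately have "2^Suc k dvd A (c k+2^k)" by auto
    then show ?thesis using ck d_def False by auto
  qed
  have "c (Suc k) = d"
    unfolding c_def
    apply (rule the_equality)
    using dprop uniq_c[OF k1] by blast+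
  thus ?thesis using d_def by simp
qed

end
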